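(* Let $G$ be a connected graph with $\delta(G)=1$, girth at least $15$, and $G\in\mathcal U$. If $s_1$ and $s_2$ are single star support vertices of $G$, then $d_G(s_1,s_2)\neq 3$.
   Context: All graphs are finite and simple. A set $P\subseteq V(G)$ is an open packing if no two distinct vertices of $P$ have a common neighbor; it is maximal if maximal under inclusion among open packings. $\rho^o(G)$ is the maximum size of an open packing and $\rho^o_L(G)$ the minimum size of a maximal open packing; $\mathcal U$ is the class of graphs with $\rho^o_L(G)=\rho^o(G)$. A leaf is a vertex of degree $1$; a support vertex is a vertex adjacent to at least one leaf; $S_G$ is the set of support vertices. A single star support vertex is a support vertex not adjacent to any other support vertex; a double star support vertex is a support vertex adjacent to another support vertex. *)

theory Defs
  imports Main
begin

definition graph :: "'a set \<Rightarrow> ('a \<Rightarrow> 'a \<Rightarrow> bool) \<Rightarrow> bool" where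
  "graph V E \<longleftrightarrow> finite V \<and> (\<forall>x y. E x y \<longrightarrow> x \<in> V \<and> y \<in> V)
     \<and> (\<forall>x y. E x y \<longrightarrow> E y x) \<and> (\<forall>x. \<not> E x x)"

definition nbhd :: "'a set \<Rightarrow> ('a \<Rightarrow> 'a \<Rightarrow> bool) \<Rightarrow> 'a \<Rightarrow> 'a set" where
  "nbhd V E v = {u \<in> V. E v u}"

definition deg :: "'a set \<Rightarrow> ('a \<Rightarrow> 'a \<Rightarrow> bool) \<Rightarrow> 'a \<Rightarrow> nat" where
  "deg V E v = card (nbhd V E v)"

definition min_degree :: "'a set \<Rightarrow> ('a \<Rightarrow> 'a \<Rightarrow> bool) \<Rightarrow> nat" where
  "min_degree V E = Min (deg V E ` V)"

definition walk :: "'a set \<Rightarrow> ('a \<Rightarrow> 'a \<Rightarrow> bool) \<Rightarrow> 'a list \<Rightarrow> bool" where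
  "walk V E xs \<longleftrightarrow> xs \<noteq> [] \<and> set xs \<subseteq> V \<and> (\<forall>i. Suc i < length xs \<longrightarrow> E (xs ! i) (xs ! Suc i))"

definition connected :: "'a set \<Rightarrow> ('a \<Rightarrow> 'a \<Rightarrow> bool) \<Rightarrow> bool" where
  "connected V E \<longleftrightarrow> V \<noteq> {} \<and>
     (\<forall>u \<in> V. \<forall>v \<in> V. \<exists>xs. walk V E xs \<and> hd xs = u \<and> last xs = v)"

definition dist :: "'a set \<Rightarrow> ('a \<Rightarrow> 'a \<Rightarrow> bool) \<Rightarrow> 'a \<Rightarrow> 'a \<Rightarrow> nat" where
  "dist V E u v = (LEAST n. \<exists>xs. walk V E xs \<and> hd xs = u \<and> last xs = v \<and> length xs = Suc n)"

text \<open>A cycle: at least 3 distinct vertices, consecutive adjacent, last adjacent to first.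
  Its length is the number of vertices (= number of edges).\<close>
definition cycle :: "'a set \<Rightarrow> ('a \<Rightarrow> 'a \<Rightarrow> bool) \<Rightarrow> 'a list \<Rightarrow> bool" where
  "cycle V E xs \<longleftrightarrow> length xs \<ge> 3 \<and> distinct xs \<and> walk V E xs \<and> E (last xs) (hd xs)"

text \<open>Girth at least k (vacuously true for acyclic graphs, girth = infinity).\<close>
definition girth_at_least :: "'a set \<Rightarrow> ('a \<Rightarrow> 'a \<Rightarrow> bool) \<Rightarrow> nat \<Rightarrow> bool" where
  "girth_at_least V E k \<longleftrightarrow> (\<forall>xs. cycle V E xs \<longrightarrow> length xs \<ge> k)"

definition open_packing :: "'a set \<Rightarrow> ('a \<Rightarrow> 'a \<Rightarrow> bool) \<Rightarrow> 'a set \<Rightarrow> bool" where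
  "open_packing V E P \<longleftrightarrow> P \<subseteq> V \<and>
     (\<forall>x \<in> P. \<forall>y \<in> P. x \<noteq> y \<longrightarrow> \<not> (\<exists>w \<in> V. E x w \<and> E y w))"

definition maximal_open_packing :: "'a set \<Rightarrow> ('a \<Rightarrow> 'a \<Rightarrow> bool) \<Rightarrow> 'a set \<Rightarrow> bool" where
  "maximal_open_packing V E P \<longleftrightarrow> open_packing V E P \<and>
     (\<forall>Q. open_packing V E Q \<and> P \<subseteq> Q \<longrightarrow> Q = P)"

definition open_packing_number :: "'a set \<Rightarrow> ('a \<Rightarrow> 'a \<Rightarrow> bool) \<Rightarrow> nat" where
  "open_packing_number V E = Max (card ` {P. open_packing V E P})"

definition lower_open_packing_number :: "'a set \<Rightarrow> ('a \<Rightarrow> 'a \<Rightarrow> bool) \<Rightarrow> nat" where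
  "lower_open_packing_number V E = Min (card ` {P. maximal_open_packing V E P})"

definition class_U :: "'a set \<Rightarrow> ('a \<Rightarrow> 'a \<Rightarrow> bool) \<Rightarrow> bool" where
  "class_U V E \<longleftrightarrow> lower_open_packing_number V E = open_packing_number V E"

definition leaf :: "'a set \<Rightarrow> ('a \<Rightarrow> 'a \<Rightarrow> bool) \<Rightarrow> 'a \<Rightarrow> bool" where
  "leaf V E v \<longleftrightarrow> v \<in> V \<and> deg V E v = 1"

definition support_vertex :: "'a set \<Rightarrow> ('a \<Rightarrow> 'a \<Rightarrow> bool) \<Rightarrow> 'a \<Rightarrow> bool" where
  "support_vertex V E s \<longleftrightarrow> s \<in> V \<and> (\<exists>l \<in> V. E s l \<and> leaf V E l)"

definition single_star_support :: "'a set \<Rightarrow> ('a \<Rightarrow> 'a \<Rightarrow> bool) \<Rightarrow> 'a \<Rightarrow> bool" where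
  "single_star_support V E s \<longleftrightarrow> support_vertex V E s \<and>
     \<not> (\<exists>t \<in> V. E s t \<and> support_vertex V E t)"

end

theory Submission
  imports Defs
begin

lemma walk_single: "walk V E [x] \<longleftrightarrow> x \<in> V"
  by (auto simp: walk_def)

lemma walk_Cons2: "walk V E (x # y # ys) \<longleftrightarrow> x \<in> V \<and> E x y \<and> walk V E (y # ys)"
proof
  assume w: "walk V E (x # y # ys)"
  show "x \<in> V \<and> E x y \<and> walk V E (y # ys)"
  proof (intro conjI)
    show "x \<in> V" using w by (auto simp: walk_def)
    have A: "\<forall>i. Suc i < length (x # y # ys) \<longrightarrow> E ((x # y # ys) ! i) ((x # y # ys) ! Suc i)"
      using w unfolding walk_def by blast
    have "E ((x # y # ys) ! 0) ((x # y # ys) ! Suc 0)" using A[rule_format, of 0] by simp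
    then show "E x y" by simp
    show "walk V E (y # ys)" unfolding walk_def
    proof (intro conjI allI impI)
      show "y # ys \<noteq> []" by simp
      show "set (y # ys) \<subseteq> V" using w by (auto simp: walk_def)
      fix i assume "Suc i < length (y # ys)"
      then have "Suc (Suc i) < length (x # y # ys)" by simp
      then have "E ((x # y # ys) ! Suc i) ((x # y # ys) ! Suc (Suc i))" using A by blast
      then show "E ((y # ys) ! i) ((y # ys) ! Suc i)" by simp
    qed
  qed
next
  assume h: "x \<in> V \<and> E x y \<and> walk V E (y # ys)"
  show "walk V E (x # y # ys)" unfolding walk_def
  proof (intro conjI allI impI)
    show "x # y # ys \<noteq> []" by simp
    show "set (x # y # ys) \<subseteq> V" using h by (auto simp: walk_def)
    fix i assume i: "Suc i < length (x # y # ys)"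
    show "E ((x # y # ys) ! i) ((x # y # ys) ! Suc i)"
    proof (cases i)
      case 0 then show ?thesis using h by simp
    next
      case (Suc k) then show ?thesis using h i unfolding walk_def by auto
    qed
  qed
qed

lemma walk_snoc: "ys \<noteq> [] \<Longrightarrow> walk V E (ys @ [z]) \<longleftrightarrow> walk V E ys \<and> z \<in> V \<and> E (last ys) z"
proof (induction ys rule: induct_list012)
  case 1 then show ?case by simp
next
  case (2 x) then show ?case by (auto simp add: walk_Cons2 walk_single)
next
  case (3 x y zs)
  then show ?case by (simp add: walk_Cons2)
qed

lemma walk_hd_in: "walk V E xs \<Longrightarrow> hd xs \<in> V"
  by (auto simp: walk_def)
lemma walk_last_in: "walk V E xs \<Longrightarrow> last xs \<in> V"
  by (auto simp: walk_def)

lemma walk_take: assumes "walk V E xs" "0 < k" shows "walk V E (take k xs)"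
  unfolding walk_def
proof (intro conjI allI impI)
  show "take k xs \<noteq> []" using assms by (auto simp: walk_def)
  show "set (take k xs) \<subseteq> V" using assms set_take_subset[of k xs] by (auto simp: walk_def)
  fix i assume i: "Suc i < length (take k xs)"
  then have "Suc i < length xs" "Suc i < k" by auto
  then have "E (xs ! i) (xs ! Suc i)" using assms by (auto simp: walk_def)
  then show "E (take k xs ! i) (take k xs ! Suc i)" using \<open>Suc i < k\<close> by simp
qed

lemma op_intro:
  assumes "P \<subseteq> V" and "\<And>x y w. x \<in> P \<Longrightarrow> y \<in> P \<Longrightarrow> x \<noteq> y \<Longrightarrow> E x w \<Longrightarrow> E y w \<Longrightarrow> False"
  shows "open_packing V E P"
  using assms unfolding open_packing_def by blast

lemma swap_lemma:
  assumes g: "graph V E" and U: "class_U V E"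
    and S: "open_packing V E S" and T: "open_packing V E T"
    and cardST: "card S < card T"
    and cover: "\<And>t x. t \<in> T \<Longrightarrow> x \<in> V \<Longrightarrow> (x = t \<or> (\<exists>w\<in>V. E x w \<and> E t w)) \<Longrightarrow>
         (x \<in> S \<or> (\<exists>s\<in>S. \<exists>w\<in>V. E x w \<and> E s w))"
  shows False
proof -
  have fV: "finite V" using g by (simp add: graph_def)
  have SV: "S \<subseteq> V" using S by (simp add: open_packing_def)
  have TV: "T \<subseteq> V" using T by (simp add: open_packing_def)
  define F where "F = {Q. open_packing V E Q \<and> S \<subseteq> Q}"
  have finF: "finite F"
    unfolding F_def by (rule finite_subset[of _ "Pow V"]) (auto simp: open_packing_def fV)
  have "S \<in> F" using S by (simp add: F_def)
  then have ne: "F \<noteq> {}" by blast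
  obtain M where M: "M \<in> F" and Mmax: "\<forall>b\<in>F. M \<le> b \<longrightarrow> M = b"
    using finite_has_maximal[OF finF ne] by blast
  have Mop: "open_packing V E M" and SM: "S \<subseteq> M" using M by (auto simp: F_def)
  have MV: "M \<subseteq> V" using Mop by (simp add: open_packing_def)
  have Mmaxi: "maximal_open_packing V E M"
    unfolding maximal_open_packing_def
  proof (intro conjI allI impI)
    show "open_packing V E M" by (rule Mop)
    fix Q assume Q: "open_packing V E Q \<and> M \<subseteq> Q"
    then have "Q \<in> F" using SM by (auto simp: F_def)
    then show "Q = M" using Mmax Q by blast
  qed
  let ?Q = "T \<union> (M - S)"
  have key: "\<And>t y. t \<in> T \<Longrightarrow> y \<in> M - S \<Longrightarrow> (y = t \<or> (\<exists>w\<in>V. E y w \<and> E t w)) \<Longrightarrow> False"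
  proof -
    fix t y assume t: "t \<in> T" and y: "y \<in> M - S" and h: "y = t \<or> (\<exists>w\<in>V. E y w \<and> E t w)"
    have "y \<in> V" using y MV by auto
    from cover[OF t this h] y obtain s w where s: "s \<in> S" "w \<in> V" "E y w" "E s w" by auto
    have "s \<in> M" "s \<noteq> y" using s SM y by auto
    have "\<not> (\<exists>w\<in>V. E s w \<and> E y w)" using Mop \<open>s \<in> M\<close> \<open>s \<noteq> y\<close> y unfolding open_packing_def by blast
    then show False using s by blast
  qed
  have Qop: "open_packing V E ?Q"
  proof (rule op_intro)
    show "?Q \<subseteq> V" using TV MV by auto
  next
    fix x y w assume x: "x \<in> ?Q" and y: "y \<in> ?Q" and xy: "x \<noteq> y" and ex: "E x w" and ey: "E y w"
    have wV: "w \<in> V" using g ex by (simp add: graph_def)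
    consider "x \<in> T" "y \<in> T" | "x \<in> T" "y \<in> M - S" | "x \<in> M - S" "y \<in> T" | "x \<in> M - S" "y \<in> M - S"
      using x y by blast
    then show False
    proof cases
      case 1
      then have "\<not> (\<exists>w\<in>V. E x w \<and> E y w)" using T xy unfolding open_packing_def by blast
      then show ?thesis using ex ey wV by blast
    next
      case 2 then show ?thesis using key ex ey wV by blast
    next
      case 3 then show ?thesis using key ex ey wV by blast
    next
      case 4
      then have "\<not> (\<exists>w\<in>V. E x w \<and> E y w)" using Mop xy unfolding open_packing_def by blast
      then show ?thesis using ex ey wV by blast
    qed
  qed
  have disj: "T \<inter> (M - S) = {}"
  proof (rule ccontr)
    assume "T \<inter> (M - S) \<noteq> {}"
    then obtain t where "t \<in> T" "t \<in> M - S" by blast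
    then show False using key[of t t] by blast
  qed
  have finT: "finite T" using TV fV finite_subset by blast
  have finM: "finite M" using MV fV finite_subset by blast
  have cQ: "card ?Q = card T + card (M - S)" using disj finT finM by (simp add: card_Un_disjoint)
  have cMS: "card (M - S) = card M - card S" using SM finM by (simp add: card_Diff_subset finite_subset)
  have cSM: "card S \<le> card M" using SM finM by (simp add: card_mono)
  have big: "card M < card ?Q" using cQ cMS cSM cardST by linarith
  have finP: "finite {P. open_packing V E P}"
    by (rule finite_subset[of _ "Pow V"]) (auto simp: open_packing_def fV)
  have "{P. maximal_open_packing V E P} \<subseteq> {P. open_packing V E P}"
    by (auto simp: maximal_open_packing_def)
  then have finMx: "finite {P. maximal_open_packing V E P}" using finP finite_subset by blast
  have c1: "card M \<in> card ` {P. maximal_open_packing V E P}" using Mmaxi by blast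
  have c2: "card ?Q \<in> card ` {P. open_packing V E P}" using Qop by blast
  have "lower_open_packing_number V E \<le> card M"
    unfolding lower_open_packing_number_def using Min_le[OF finite_imageI[OF finMx] c1] .
  moreover have "card ?Q \<le> open_packing_number V E"
    unfolding open_packing_number_def using Max_ge[OF finite_imageI[OF finP] c2] .
  ultimately show False using U big unfolding class_U_def by linarith
qed



lemma leaf_uniq: assumes g: "graph V E" and l: "leaf V E l" and "E l w" "E l w'" shows "w = w'"
proof -
  have "card (nbhd V E l) = 1" using l by (simp add: leaf_def deg_def)
  then obtain z where z: "nbhd V E l = {z}" by (rule card_1_singletonE)
  have "w \<in> V" "w' \<in> V" using g assms(3,4) by (simp_all add: graph_def)
  then have "w \<in> nbhd V E l" "w' \<in> nbhd V E l" using assms(3,4) by (simp_all add: nbhd_def)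
  then show ?thesis using z by simp
qed

lemma leaf_if_one: assumes g: "graph V E" and "v \<in> V" "E v u" "\<And>y. E v y \<Longrightarrow> y = u"
  shows "leaf V E v"
proof -
  have uV: "u \<in> V" using g assms(3) by (simp add: graph_def)
  have "nbhd V E v = {u}"
  proof
    show "nbhd V E v \<subseteq> {u}" unfolding nbhd_def using assms(4) by blast
    show "{u} \<subseteq> nbhd V E v" unfolding nbhd_def using uV assms(3) by blast
  qed
  then show ?thesis using assms(2) by (simp add: leaf_def deg_def)
qed

lemma nonleaf_other: assumes g: "graph V E" and "y \<in> V" "\<not> leaf V E y" "E y v"
  shows "\<exists>c. E y c \<and> c \<noteq> v"
proof (rule ccontr)
  assume h: "\<not> (\<exists>c. E y c \<and> c \<noteq> v)"
  have "\<And>c. E y c \<Longrightarrow> c = v" using h by blast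
  then have "leaf V E y" by (rule leaf_if_one[OF g assms(2) assms(4)])
  then show False using assms(3) by simp
qed

locale lev =
  fixes V :: "'a set" and E :: "'a \<Rightarrow> 'a \<Rightarrow> bool" and r :: 'a
  assumes g: "graph V E" and conn: "connected V E" and gir: "girth_at_least V E 15"
    and rV: "r \<in> V"
begin

abbreviation d where "d \<equiv> dist V E r"

lemma EV1: "E x y \<Longrightarrow> x \<in> V" using g by (simp add: graph_def)
lemma EV2: "E x y \<Longrightarrow> y \<in> V" using g by (simp add: graph_def)
lemma Esym: "E x y \<Longrightarrow> E y x" using g by (simp add: graph_def)
lemma Eirr: "\<not> E x x" using g by (simp add: graph_def)

lemma walk_ex: assumes "x \<in> V"
  shows "\<exists>xs. walk V E xs \<and> hd xs = r \<and> last xs = x \<and> length xs = Suc (d x)"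
proof -
  obtain xs where xs: "walk V E xs" "hd xs = r" "last xs = x"
    using conn rV assms unfolding connected_def by blast
  have "xs \<noteq> []" using xs(1) by (simp add: walk_def)
  then have "length xs = Suc (length xs - 1)" by simp
  then have "\<exists>n. \<exists>xs. walk V E xs \<and> hd xs = r \<and> last xs = x \<and> length xs = Suc n" using xs by blast
  from LeastI_ex[OF this] show ?thesis unfolding dist_def .
qed

lemma d_le: "walk V E xs \<Longrightarrow> hd xs = r \<Longrightarrow> last xs = x \<Longrightarrow> length xs = Suc n \<Longrightarrow> d x \<le> n"
  unfolding dist_def by (rule Least_le) blast

lemma d_r: "d r = 0"
proof -
  have "d r \<le> 0" by (rule d_le[of "[r]"]) (auto simp: walk_single rV)
  then show ?thesis by simp
qed

lemma d0: assumes "x \<in> V" "d x = 0" shows "x = r"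
proof -
  obtain xs where xs: "walk V E xs" "hd xs = r" "last xs = x" "length xs = Suc 0"
    using walk_ex[OF assms(1)] assms(2) by auto
  then obtain z where "xs = [z]" by (metis length_0_conv length_Suc_conv)
  then show ?thesis using xs by simp
qed

lemma dE: assumes "E x y" shows "d y \<le> Suc (d x)"
proof -
  obtain xs where xs: "walk V E xs" "hd xs = r" "last xs = x" "length xs = Suc (d x)"
    using walk_ex[OF EV1[OF assms]] by blast
  have ne: "xs \<noteq> []" using xs by auto
  have "walk V E (xs @ [y])" using walk_snoc[OF ne] xs assms EV2 by auto
  moreover have "hd (xs @ [y]) = r" using ne xs by simp
  ultimately show ?thesis using d_le[of "xs @ [y]" y "Suc (d x)"] xs by simp
qed

lemma dE2: "E x y \<Longrightarrow> d x \<le> Suc (d y)"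
  using dE Esym by blast

lemma parent: assumes "x \<in> V" "0 < d x" shows "\<exists>p. E p x \<and> Suc (d p) = d x"
proof -
  obtain xs where xs: "walk V E xs" "hd xs = r" "last xs = x" "length xs = Suc (d x)"
    using walk_ex[OF assms(1)] by blast
  define k where "k = d x"
  have k: "0 < k" using assms k_def by simp
  define p where "p = xs ! (k - 1)"
  have "Suc (k - 1) < length xs" using xs k k_def by simp
  then have Epx0: "E (xs ! (k - 1)) (xs ! Suc (k - 1))" using xs(1) by (simp add: walk_def)
  have xne: "xs \<noteq> []" using xs by auto
  have "last xs = xs ! k" using xs k_def xne by (simp add: last_conv_nth)
  then have Epx: "E p x" using Epx0 k xs(3) by (simp add: p_def)
  have tw: "walk V E (take k xs)" using walk_take[OF xs(1) k] .
  have "hd (take k xs) = r" using xs k by (simp add: hd_take)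
  moreover have "last (take k xs) = p"
  proof -
    have "take k xs \<noteq> []" using k xne by simp
    then have "last (take k xs) = take k xs ! (length (take k xs) - 1)" by (simp add: last_conv_nth)
    also have "\<dots> = xs ! (k - 1)" using xs k k_def by simp
    finally show ?thesis by (simp add: p_def)
  qed
  moreover have "length (take k xs) = Suc (k - 1)" using xs k k_def by simp
  ultimately have "d p \<le> k - 1" using d_le tw by blast
  moreover have "d x \<le> Suc (d p)" using dE[OF Epx] .
  ultimately show ?thesis using Epx k k_def by (intro exI[of _ p]) simp
qed

lemma levelL:
  "\<lbrakk> p1 \<noteq> p2; d p1 = j; d p2 = j; walk V E ys; distinct ys; hd ys = p1; last ys = p2;
     \<forall>z\<in>set ys. j \<le> d z; 2*j + length ys \<le> 15 \<rbrakk> \<Longrightarrow> False"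
proof (induction j arbitrary: p1 p2 ys)
  case 0
  have ne: "ys \<noteq> []" using "0.prems" by (simp add: walk_def)
  have "p1 \<in> V" using "0.prems" walk_hd_in by blast
  moreover have "p2 \<in> V" using "0.prems" walk_last_in by blast
  ultimately show False using d0 "0.prems" by metis
next
  case (Suc j)
  have ne: "ys \<noteq> []" using Suc.prems by (simp add: walk_def)
  have p1V: "p1 \<in> V" using Suc.prems walk_hd_in by blast
  have p2V: "p2 \<in> V" using Suc.prems walk_last_in by blast
  obtain q1 where q1: "E q1 p1" "Suc (d q1) = d p1" using parent[OF p1V] Suc.prems by auto
  obtain q2 where q2: "E q2 p2" "Suc (d q2) = d p2" using parent[OF p2V] Suc.prems by auto
  have q1n: "q1 \<notin> set ys" using Suc.prems q1 by force
  have q2n: "q2 \<notin> set ys" using Suc.prems q2 by force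
  obtain y0 ys0 where ys0: "ys = y0 # ys0" using ne by (cases ys) auto
  have len2: "2 \<le> length ys"
  proof (rule ccontr)
    assume "\<not> 2 \<le> length ys"
    then have "ys0 = []" using ys0 by (cases ys0) auto
    then show False using Suc.prems ys0 by simp
  qed
  have wq: "walk V E (q1 # ys)"
    using ys0 Suc.prems q1 EV1 by (simp add: walk_Cons2)
  show False
  proof (cases "q1 = q2")
    case True
    have "cycle V E (q1 # ys)" unfolding cycle_def
      using len2 Suc.prems q1n wq q2 True Esym by auto
    then have "15 \<le> length (q1 # ys)" using gir unfolding girth_at_least_def by blast
    then show False using Suc.prems by simp
  next
    case False
    have w2: "walk V E ((q1 # ys) @ [q2])"
      using walk_snoc[of "q1 # ys" V E q2] wq Suc.prems q2 EV1 Esym ne by auto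
    show False
    proof (rule Suc.IH[of q1 q2 "(q1 # ys) @ [q2]"])
      show "q1 \<noteq> q2" by (rule False)
      show "d q1 = j" "d q2 = j" using q1 q2 Suc.prems by auto
      show "walk V E ((q1 # ys) @ [q2])" by (rule w2)
      show "distinct ((q1 # ys) @ [q2])" using q1n q2n False Suc.prems by auto
      show "hd ((q1 # ys) @ [q2]) = q1" by simp
      show "last ((q1 # ys) @ [q2]) = q2" by simp
      show "\<forall>z\<in>set ((q1 # ys) @ [q2]). j \<le> d z" using Suc.prems q1 q2 by force
      show "2 * j + length ((q1 # ys) @ [q2]) \<le> 15" using Suc.prems by simp
    qed
  qed
qed

lemma P1: assumes "E x y" "d x = d y" "d x \<le> 6" shows False
proof (rule levelL[of x y "d x" "[x, y]"])
  show "x \<noteq> y" using assms Eirr by blast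
  show "walk V E [x, y]" using assms EV1 EV2 by (simp add: walk_Cons2 walk_single)
qed (use assms Eirr in auto)

lemma P2: assumes "E p1 x" "E p2 x" "Suc (d p1) = d x" "Suc (d p2) = d x" "d x \<le> 7"
  shows "p1 = p2"
proof (rule ccontr)
  assume ne: "p1 \<noteq> p2"
  show False
  proof (rule levelL[of p1 p2 "d p1" "[p1, x, p2]"])
    show "walk V E [p1, x, p2]" using assms EV1 EV2 Esym by (simp add: walk_Cons2 walk_single)
    show "distinct [p1, x, p2]" using assms ne by auto
  qed (use assms ne in auto)
qed

lemma child: assumes "E p x" "Suc (d p) = d x" "E x z" "z \<noteq> p" "d x \<le> 6"
  shows "d z = Suc (d x)"
proof -
  have a: "d z \<le> Suc (d x)" using dE[OF assms(3)] .
  have b: "d x \<le> Suc (d z)" using dE2[OF assms(3)] .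
  have c: "d z \<noteq> d x" using P1[OF assms(3)] assms(5) by force
  have e: "Suc (d z) \<noteq> d x"
  proof
    assume h: "Suc (d z) = d x"
    have "E z x" using Esym assms(3) by blast
    then have "z = p" using P2[OF _ assms(1) h assms(2)] assms(5) by simp
    then show False using assms(4) by simp
  qed
  show ?thesis using a b c e by linarith
qed

end


context lev
begin

lemma d_r1: assumes "E r u" shows "d u = 1"
proof -
  have "d u \<le> 1" using dE[OF assms] d_r by simp
  moreover have "u \<noteq> r" using assms Eirr by blast
  then have "d u \<noteq> 0" using d0 EV2[OF assms] by blast
  ultimately show ?thesis by simp
qed

lemma lemmaA:
  assumes U: "class_U V E" and l1: "leaf V E l1" and rl1: "E r l1"
    and ru: "E r u" and uv: "E u v" and vr: "v \<noteq> r" and vy: "E v y" and yu: "y \<noteq> u"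
    and ly: "leaf V E y"
  shows False
proof -
  have du: "d u = 1" using d_r1[OF ru] .
  have dv: "d v = 2" using child[OF ru _ uv vr] du d_r by simp
  have dy: "d y = 3" using child[OF uv _ vy yu] du dv by simp
  have dl1: "d l1 = 1" using d_r1[OF rl1] .
  have l1r: "E l1 r" using Esym rl1 by blast
  have yv: "E y v" using Esym vy by blast
  have nuv: "\<And>w. E u w \<Longrightarrow> E v w \<Longrightarrow> False"
  proof -
    fix w assume uw: "E u w" and vw: "E v w"
    have "w \<noteq> u" using uw Eirr by blast
    then have "d w = 3" using child[OF uv _ vw] du dv by simp
    moreover have "d w \<le> 2" using dE[OF uw] du by simp
    ultimately show False by simp
  qed
  have Sop: "open_packing V E {u, v}"
  proof (rule op_intro)
    show "{u, v} \<subseteq> V" using EV1 ru uv EV2 by blast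
  next
    fix x z w assume "x \<in> {u, v}" "z \<in> {u, v}" "x \<noteq> z" "E x w" "E z w"
    then show False using nuv by blast
  qed
  have nl1: "\<And>w. E l1 w \<Longrightarrow> w = r" using leaf_uniq[OF g l1] l1r by blast
  have ny: "\<And>w. E y w \<Longrightarrow> w = v" using leaf_uniq[OF g ly] yv by blast
  have Top: "open_packing V E {l1, v, y}"
  proof (rule op_intro)
    show "{l1, v, y} \<subseteq> V" using EV1 EV2 rl1 vy by blast
  next
    fix x z w assume x: "x \<in> {l1, v, y}" and z: "z \<in> {l1, v, y}" and xz: "x \<noteq> z" and xw: "E x w" and zw: "E z w"
    have A: "E l1 w \<Longrightarrow> E v w \<Longrightarrow> False"
    proof -
      assume "E l1 w" "E v w"
      then have "E v r" using nl1 by blast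
      then have "d v \<le> Suc (d r)" using dE2 by blast
      then show False using d_r dv by simp
    qed
    have B: "E l1 w \<Longrightarrow> E y w \<Longrightarrow> False"
    proof -
      assume "E l1 w" "E y w"
      then have "E y r" using nl1 by blast
      then have "d y \<le> Suc (d r)" using dE2 by blast
      then show False using d_r dy by simp
    qed
    have C: "E v w \<Longrightarrow> E y w \<Longrightarrow> False"
      using ny Eirr by blast
    show False using x z xz xw zw A B C by blast
  qed
  have c1: "card {u, v} < card {l1, v, y}"
  proof -
    have "l1 \<noteq> v" "l1 \<noteq> y" "v \<noteq> y" using dl1 dv dy by auto
    then have "card {l1, v, y} = 3" by simp
    moreover have "card {u, v} \<le> 2" by (simp add: card_insert_le_m1)
    ultimately show ?thesis by simp
  qed
  show False
  proof (rule swap_lemma[OF g U Sop Top c1])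
    fix t x assume t: "t \<in> {l1, v, y}" and xV: "x \<in> V" and h: "x = t \<or> (\<exists>w\<in>V. E x w \<and> E t w)"
    have rV': "r \<in> V" by (rule rV)
    have vV: "v \<in> V" using EV2 uv by blast
    show "x \<in> {u, v} \<or> (\<exists>s\<in>{u, v}. \<exists>w\<in>V. E x w \<and> E s w)"
    proof -
      consider "t = l1" | "t = v" | "t = y" using t by blast
      then show ?thesis
      proof cases
        case 1
        then have "E x r" using h nl1 l1r by blast
        then show ?thesis using ru Esym rV' by blast
      next
        case 2
        then show ?thesis using h by blast
      next
        case 3
        then have "E x v" using h ny yv by blast
        then show ?thesis using uv vV by blast
      qed
    qed
  qed
qed


lemma main:
  assumes U: "class_U V E" and ss1: "single_star_support V E r"
    and sp2: "support_vertex V E s2" and ds2: "d s2 = 3"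
  shows False
proof -
  obtain l1 where l1V: "l1 \<in> V" and rl1: "E r l1" and l1: "leaf V E l1"
    using ss1 unfolding single_star_support_def support_vertex_def by blast
  have nosup: "\<And>t. E r t \<Longrightarrow> \<not> support_vertex V E t"
    using ss1 EV2 unfolding single_star_support_def by blast
  obtain l2 where s2V: "s2 \<in> V" and s2l2: "E s2 l2" and l2: "leaf V E l2"
    using sp2 unfolding support_vertex_def by blast
  obtain xs where xs: "walk V E xs" "hd xs = r" "last xs = s2" "length xs = 4"
    using walk_ex[OF s2V] ds2 by auto
  have xne: "xs \<noteq> []" using xs by auto
  define a where "a = xs ! Suc 0"
  define b where "b = xs ! Suc (Suc 0)"
  have W: "\<And>i. Suc i < 4 \<Longrightarrow> E (xs ! i) (xs ! Suc i)" using xs(1,4) unfolding walk_def by auto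
  have x0: "xs ! 0 = r" using xs xne by (simp add: hd_conv_nth)
  have "last xs = xs ! (length xs - 1)" using xne by (simp add: last_conv_nth)
  then have x3: "xs ! Suc (Suc (Suc 0)) = s2" using xs by (simp add: numeral_3_eq_3)
  have ra: "E r a" using W[of 0] x0 by (simp add: a_def)
  have ab: "E a b" using W[of "Suc 0"] by (simp add: a_def b_def)
  have bs2: "E b s2" using W[of "Suc (Suc 0)"] x3 by (simp add: b_def)
  have da: "d a = 1" using d_r1[OF ra] .
  have db: "d b = 2"
  proof -
    have "d b \<le> Suc (d a)" using dE[OF ab] .
    moreover have "d s2 \<le> Suc (d b)" using dE[OF bs2] .
    ultimately show ?thesis using da ds2 by simp
  qed
  have dl1: "d l1 = 1" using d_r1[OF rl1] .
  have l1r: "E l1 r" using Esym rl1 by blast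
  have l2s2: "E l2 s2" using Esym s2l2 by blast
  have nl1: "\<And>w. E l1 w \<Longrightarrow> w = r" using leaf_uniq[OF g l1] l1r by blast
  have nl2: "\<And>w. E l2 w \<Longrightarrow> w = s2" using leaf_uniq[OF g l2] l2s2 by blast
  define Z where "Z = {v. \<exists>u. E r u \<and> u \<noteq> a \<and> E u v \<and> v \<noteq> r}"
  have exZ: "\<forall>v\<in>Z. \<exists>t. E r (fst t) \<and> fst t \<noteq> a \<and> E (fst t) v \<and> v \<noteq> r \<and>
      E v (fst (snd t)) \<and> fst (snd t) \<noteq> fst t \<and> E (fst (snd t)) (snd (snd t)) \<and> snd (snd t) \<noteq> v"
  proof
    fix v assume "v \<in> Z"
    then obtain u where ru: "E r u" and ua: "u \<noteq> a" and uv: "E u v" and vr: "v \<noteq> r"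
      unfolding Z_def by blast
    have vV: "v \<in> V" using EV2 uv by blast
    have uV: "u \<in> V" using EV2 ru by blast
    have "\<exists>y. E v y \<and> y \<noteq> u \<and> \<not> leaf V E y"
    proof (rule ccontr)
      assume h: "\<not> (\<exists>y. E v y \<and> y \<noteq> u \<and> \<not> leaf V E y)"
      show False
      proof (cases "\<exists>y. E v y \<and> y \<noteq> u")
        case True
        then obtain y where "E v y" "y \<noteq> u" by blast
        moreover then have "leaf V E y" using h by blast
        ultimately show False using lemmaA[OF U l1 rl1 ru uv vr] by blast
      next
        case False
        then have "\<And>y. E v y \<Longrightarrow> y = u" by blast
        then have "leaf V E v" using leaf_if_one[OF g vV] uv Esym by blast
        then have "support_vertex V E u" unfolding support_vertex_def using uV vV uv by blast
        then show False using nosup ru by blast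
      qed
    qed
    then obtain y where vy: "E v y" and yu: "y \<noteq> u" and ny: "\<not> leaf V E y" by blast
    obtain c where yc: "E y c" and cv: "c \<noteq> v" using nonleaf_other[OF g EV2[OF vy] ny] Esym vy by blast
    show "\<exists>t. E r (fst t) \<and> fst t \<noteq> a \<and> E (fst t) v \<and> v \<noteq> r \<and>
      E v (fst (snd t)) \<and> fst (snd t) \<noteq> fst t \<and> E (fst (snd t)) (snd (snd t)) \<and> snd (snd t) \<noteq> v"
      by (rule exI[of _ "(u, y, c)"]) (simp add: ru ua uv vr vy yu yc cv)
  qed
  from bchoice[OF exZ] obtain f where f: "\<forall>v\<in>Z. E r (fst (f v)) \<and> fst (f v) \<noteq> a \<and> E (fst (f v)) v \<and> v \<noteq> r \<and>
      E v (fst (snd (f v))) \<and> fst (snd (f v)) \<noteq> fst (f v) \<and> E (fst (snd (f v))) (snd (snd (f v))) \<and> snd (snd (f v)) \<noteq> v"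
    by blast
  define fU where "fU v = fst (f v)" for v
  define fY where "fY v = fst (snd (f v))" for v
  define fC where "fC v = snd (snd (f v))" for v
  have fP: "E r (fU v)" "fU v \<noteq> a" "E (fU v) v" "v \<noteq> r" "E v (fY v)" "fY v \<noteq> fU v"
     "E (fY v) (fC v)" "fC v \<noteq> v" if "v \<in> Z" for v
    using f that unfolding fU_def fY_def fC_def by auto
  have lev: "d (fU v) = 1 \<and> d v = 2 \<and> d (fY v) = 3 \<and> d (fC v) = 4" if vZ: "v \<in> Z" for v
  proof -
    have 1: "d (fU v) = 1" using d_r1 fP(1)[OF vZ] by blast
    have 2: "d v = 2" using child[OF fP(1)[OF vZ] _ fP(3)[OF vZ] fP(4)[OF vZ]] 1 d_r by simp
    have 3: "d (fY v) = 3" using child[OF fP(3)[OF vZ] _ fP(5)[OF vZ] fP(6)[OF vZ]] 1 2 by simp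
    have 4: "d (fC v) = 4" using child[OF fP(5)[OF vZ] _ fP(7)[OF vZ] fP(8)[OF vZ]] 2 3 by simp
    show ?thesis using 1 2 3 4 by simp
  qed
  have F1: "v \<noteq> b" if vZ: "v \<in> Z" for v
  proof
    assume vb: "v = b"
    have "fU v = a" using P2[of "fU v" b a] fP(3)[OF vZ] vb ab lev[OF vZ] da db by simp
    then show False using fP(2)[OF vZ] by simp
  qed
  have F2: "fY v \<noteq> s2" if vZ: "v \<in> Z" for v
  proof
    assume "fY v = s2"
    then have "v = b" using P2[of v s2 b] fP(5)[OF vZ] bs2 lev[OF vZ] db ds2 by simp
    then show False using F1[OF vZ] by simp
  qed
  have F3: "\<not> E b (fY v)" if vZ: "v \<in> Z" for v
  proof
    assume "E b (fY v)"
    then have "b = v" using P2[of b "fY v" v] fP(5)[OF vZ] lev[OF vZ] db by simp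
    then show False using F1[OF vZ] by simp
  qed
  have F4: "q = fY v" if vZ: "v \<in> Z" and "E q (fC v)" "d q = 3" for v q
    using P2[of q "fC v" "fY v"] that fP(7)[OF vZ] lev[OF vZ] by simp
  have F5: "v = v'" if "v \<in> Z" "v' \<in> Z" "fY v = fY v'" for v v'
  proof -
    have "E v (fY v)" "E v' (fY v)" using fP(5)[OF that(1)] fP(5)[OF that(2)] that(3) by auto
    then show ?thesis using P2[of v "fY v" v'] lev[OF that(1)] lev[OF that(2)] that(3) by simp
  qed
  define C where "C = fC ` Z"
  have CV: "C \<subseteq> V" unfolding C_def using fP(7) EV2 by blast
  have finV: "finite V" using g by (simp add: graph_def)
  have finC: "finite C" using CV finV finite_subset by blast
  have aV: "a \<in> V" and bV: "b \<in> V" using EV2 ra ab by blast+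
  have n_ab: "\<And>w. E a w \<Longrightarrow> E b w \<Longrightarrow> False"
  proof -
    fix w assume aw: "E a w" and bw: "E b w"
    have "w \<noteq> a" using aw Eirr by blast
    then have "d w = 3" using child[OF ab _ bw] da db by simp
    moreover have "d w \<le> Suc (d a)" using dE[OF aw] .
    ultimately show False using da by simp
  qed
  have n_ac: "\<And>w c. c \<in> C \<Longrightarrow> E a w \<Longrightarrow> E c w \<Longrightarrow> False"
  proof -
    fix w c assume "c \<in> C" "E a w" "E c w"
    then obtain v where vZ: "v \<in> Z" and cv: "c = fC v" unfolding C_def by blast
    have "d c \<le> Suc (d w)" using dE2[OF \<open>E c w\<close>] .
    moreover have "d w \<le> Suc (d a)" using dE[OF \<open>E a w\<close>] .
    ultimately show False using lev[OF vZ] cv da by simp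
  qed
  have n_bc: "\<And>w c. c \<in> C \<Longrightarrow> E b w \<Longrightarrow> E c w \<Longrightarrow> False"
  proof -
    fix w c assume "c \<in> C" and bw: "E b w" and cw: "E c w"
    then obtain v where vZ: "v \<in> Z" and cv: "c = fC v" unfolding C_def by blast
    have "d c \<le> Suc (d w)" using dE2[OF cw] .
    moreover have "d w \<le> Suc (d b)" using dE[OF bw] .
    ultimately have "d w = 3" using lev[OF vZ] cv db by simp
    then have "w = fY v" using F4[OF vZ] Esym cw cv by blast
    then show False using F3[OF vZ] bw by simp
  qed
  have n_cc: "\<And>w c c'. c \<in> C \<Longrightarrow> c' \<in> C \<Longrightarrow> c \<noteq> c' \<Longrightarrow> E c w \<Longrightarrow> E c' w \<Longrightarrow> False"
  proof -
    fix w c c' assume "c \<in> C" "c' \<in> C" and cc: "c \<noteq> c'" and cw: "E c w" and cw': "E c' w"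
    then obtain v v' where vZ: "v \<in> Z" and cv: "c = fC v" and vZ': "v' \<in> Z" and cv': "c' = fC v'"
      unfolding C_def by blast
    have dc: "d c = 4" "d c' = 4" using lev vZ vZ' cv cv' by auto
    have "d c \<le> Suc (d w)" using dE2[OF cw] .
    moreover have "d w \<le> Suc (d c)" using dE[OF cw] .
    ultimately consider "d w = 3" | "d w = 4" | "d w = 5" using dc by linarith
    then show False
    proof cases
      case 1
      then have "w = fY v" "w = fY v'" using F4[OF vZ] F4[OF vZ'] Esym cw cw' cv cv' by blast+
      then have "v = v'" using F5[OF vZ vZ'] by simp
      then show False using cc cv cv' by simp
    next
      case 2
      then show False using P1[OF cw] dc by simp
    next
      case 3
      have "c = c'" using P2[OF cw cw'] dc 3 by simp
      then show False using cc by simp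
    qed
  qed
  have n_l1r: "\<And>w. E l1 w \<Longrightarrow> E r w \<Longrightarrow> False"
    using nl1 Eirr by blast
  have n_l1l2: "\<And>w. E l1 w \<Longrightarrow> E l2 w \<Longrightarrow> False"
  proof -
    fix w assume "E l1 w" "E l2 w"
    then have "r = s2" using nl1 nl2 by blast
    then show False using ds2 d_r by simp
  qed
  have n_rl2: "\<And>w. E r w \<Longrightarrow> E l2 w \<Longrightarrow> False"
  proof -
    fix w assume "E r w" "E l2 w"
    then have "E r s2" using nl2 by blast
    then have "d s2 \<le> Suc (d r)" using dE by blast
    then show False using ds2 d_r by simp
  qed
  have n_l1c: "\<And>w c. c \<in> C \<Longrightarrow> E l1 w \<Longrightarrow> E c w \<Longrightarrow> False"
  proof -
    fix w c assume "c \<in> C" "E l1 w" "E c w"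
    then obtain v where vZ: "v \<in> Z" and cv: "c = fC v" unfolding C_def by blast
    have "E c r" using nl1 \<open>E l1 w\<close> \<open>E c w\<close> by blast
    then have "d c \<le> Suc (d r)" using dE2 by blast
    then show False using lev[OF vZ] cv d_r by simp
  qed
  have n_rc: "\<And>w c. c \<in> C \<Longrightarrow> E r w \<Longrightarrow> E c w \<Longrightarrow> False"
  proof -
    fix w c assume "c \<in> C" "E r w" "E c w"
    then obtain v where vZ: "v \<in> Z" and cv: "c = fC v" unfolding C_def by blast
    have "d c \<le> Suc (d w)" using dE2[OF \<open>E c w\<close>] .
    moreover have "d w \<le> Suc (d r)" using dE[OF \<open>E r w\<close>] .
    ultimately show False using lev[OF vZ] cv d_r by simp
  qed
  have l2C: "\<And>v. v \<in> Z \<Longrightarrow> E (fY v) l2 \<Longrightarrow> False"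
  proof -
    fix v assume vZ: "v \<in> Z" and "E (fY v) l2"
    then have "fY v = s2" using nl2 Esym by blast
    then show False using F2[OF vZ] by simp
  qed
  have n_l2c: "\<And>w c. c \<in> C \<Longrightarrow> E l2 w \<Longrightarrow> E c w \<Longrightarrow> False"
  proof -
    fix w c assume "c \<in> C" "E l2 w" "E c w"
    then obtain v where vZ: "v \<in> Z" and cv: "c = fC v" unfolding C_def by blast
    have "E s2 c" using nl2 \<open>E l2 w\<close> \<open>E c w\<close> Esym by blast
    then have "s2 = fY v" using F4[OF vZ] cv ds2 by simp
    then show False using F2[OF vZ] by simp
  qed
  let ?S = "insert a (insert b C)"
  let ?T = "insert l1 (insert r (insert l2 C))"
  have Sop: "open_packing V E ?S"
  proof (rule op_intro)
    show "?S \<subseteq> V" using aV bV CV by blast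
  next
    fix x y w assume x: "x \<in> ?S" and y: "y \<in> ?S" and xy: "x \<noteq> y" and xw: "E x w" and yw: "E y w"
    show False using x y xy xw yw n_ab n_ac n_bc n_cc by blast
  qed
  have l2V: "l2 \<in> V" using EV2 s2l2 by blast
  have Top: "open_packing V E ?T"
  proof (rule op_intro)
    show "?T \<subseteq> V" using l1V rV l2V CV by blast
  next
    fix x y w assume x: "x \<in> ?T" and y: "y \<in> ?T" and xy: "x \<noteq> y" and xw: "E x w" and yw: "E y w"
    show False using x y xy xw yw n_l1r n_l1l2 n_rl2 n_l1c n_rc n_l2c n_cc by blast
  qed
  have cS: "card ?S \<le> card C + 2"
    using card_insert_le_m1 finC by (simp add: card_insert_if)
  have l2nC: "l2 \<notin> C"
  proof
    assume "l2 \<in> C"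
    then obtain v where vZ: "v \<in> Z" and "l2 = fC v" unfolding C_def by blast
    then show False using l2C fP(7) by blast
  qed
  have rnC: "r \<notin> C" using lev d_r unfolding C_def by force
  have l1nC: "l1 \<notin> C" using lev dl1 unfolding C_def by force
  have "l1 \<noteq> r" using rl1 Eirr by blast
  moreover have "l1 \<noteq> l2"
  proof
    assume "l1 = l2"
    then have "r = s2" using nl1 l2s2 by blast
    then show False using ds2 d_r by simp
  qed
  moreover have "r \<noteq> l2"
  proof
    assume "r = l2"
    then have "E s2 r" using s2l2 by simp
    then have "d s2 \<le> Suc (d r)" using dE2 Esym by blast
    then show False using ds2 d_r by simp
  qed
  ultimately have cT: "card ?T = card C + 3" using l2nC rnC l1nC finC by simp
  have cST: "card ?S < card ?T" using cS cT by simp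
  show False
  proof (rule swap_lemma[OF g U Sop Top cST])
    fix t x assume t: "t \<in> ?T" and xV: "x \<in> V" and h: "x = t \<or> (\<exists>w\<in>V. E x w \<and> E t w)"
    show "x \<in> ?S \<or> (\<exists>s\<in>?S. \<exists>w\<in>V. E x w \<and> E s w)"
    proof -
      consider "t = l1" | "t = r" | "t = l2" | "t \<in> C" using t by blast
      then show ?thesis
      proof cases
        case 1
        then have "E x r" using h nl1 l1r by blast
        then show ?thesis using ra Esym rV by blast
      next
        case 3
        then have "E x s2" using h nl2 l2s2 by blast
        then show ?thesis using bs2 s2V by blast
      next
        case 4
        then show ?thesis using h by blast
      next
        case 2
        show ?thesis
        proof (cases "x = r")
          case True
          then show ?thesis using ra ab Esym aV by blast
        next
          case False
          then obtain w where wV: "w \<in> V" and xw: "E x w" and rw: "E r w" using h 2 by blast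
          show ?thesis
          proof (cases "w = a")
            case True
            then show ?thesis using xw ab Esym aV by blast
          next
            case wa: False
            have xZ: "x \<in> Z" unfolding Z_def using rw wa xw Esym False by blast
            have "fC x \<in> ?S" unfolding C_def using xZ by blast
            moreover have "E x (fY x)" "E (fC x) (fY x)" using fP(5)[OF xZ] fP(7)[OF xZ] Esym by blast+
            moreover have "fY x \<in> V" using EV2 fP(5)[OF xZ] by blast
            ultimately show ?thesis by blast
          qed
        qed
      qed
    qed
  qed
qed

end

theorem claim1:
  fixes V :: "'a set" and E :: "'a \<Rightarrow> 'a \<Rightarrow> bool" and s1 s2 :: 'a
  assumes "graph V E"
    and "connected V E"
    and "min_degree V E = 1"
    and "girth_at_least V E 15"
    and "class_U V E"
    and "single_star_support V E s1"
    and "single_star_support V E s2"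
  shows "dist V E s1 s2 \<noteq> 3"
proof
  assume h: "dist V E s1 s2 = 3"
  have s1V: "s1 \<in> V" using assms(6) by (simp add: single_star_support_def support_vertex_def)
  interpret lev V E s1 using assms(1,2,4) s1V by unfold_locales
  show False
    using main[OF assms(5) assms(6)] assms(7) h unfolding single_star_support_def by blast
qed

end
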